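(* Let $P$ be the program NQUEENS. Then $\mathcal{M}_P\subseteq S$; that is, NQUEENS is correct with respect to $S=S_{pq}\cup S_{pqs}$. In fact $S$ is a Herbrand model of NQUEENS: for every ground instance $H\gets B_1,\dots,B_n$ ($n\ge0$) of a clause of NQUEENS, if $B_1,\dots,B_n\in S$ then $H\in S$.
   Context: Terms are built over a fixed alphabet containing the constant $0$, the unary symbol $s$, the list constant $[\,]$ and the binary list constructor $[\cdot|\cdot]$; $\mathcal{HU}$ is the set of ground terms and $\mathcal{HB}$ the set of ground atoms. A natural number $i$ is identified with the term $s^i(0)$. Prolog list notation is used: $[e_1,\dots,e_n|e]$ stands for $e$ when $n=0$, and a list of length $n$ is a term $[e_1,\dots,e_n]$. A term $e$ is the $k$-th member of a term $t$ ($k\ge 1$) if $t=[e_1,\dots,e_{k-1},e|e']$ for some terms $e_1,\dots,e_{k-1},e'$; $e$ is a member of $t$ if it is its $k$-th member for some $k$. A list of distinct members is a list whose elements are pairwise distinct. The program NQUEENS consists of the definite clauses (capitalized names are variables): (C1) $pqs(0,X_1,X_2,X_3)$. (C2) $pqs(s(I),Cs,Us,[X|Ds]) \gets pqs(I,Cs,[Y|Us],Ds),\ pq(s(I),Cs,Us,Ds)$. (C3) $pq(I,[I|X_1],[I|X_2],[I|X_3])$. (C4) $pq(I,[X_1|Cs],[X_2|Us],[X_3|Ds]) \gets pq(I,Cs,Us,Ds)$. $\mathcal{M}_P$ denotes the least Herbrand model of a program $P$. If a number $j$ is the $k$-th member of a list $cs$, the up-diagonal number of $j$ w.r.t. $i$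 in $cs$ is $k+j-i$ and the down-diagonal number is $k+i-j$. A triple $(cs,us,ds)$ of terms is correct up to $m$ w.r.t. $i$ when $0\le m\le i$ and: $cs$ is a list of distinct members and each $j\in\{1,\dots,m\}$ is a member of $cs$; the up-diagonal numbers of $1,\dots,m$ in $cs$ are pairwise distinct, and likewise the down-diagonal numbers; and for each $j\in\{1,\dots,m\}$, if the up-diagonal (resp. down-diagonal) number of $j$ w.r.t. $i$ in $cs$ is $l>0$, then the $l$-th member of $us$ (resp. $ds$) is $j$. Specifications: $S_{pq}=\{pq(i,[c_1,\dots,c_k,i|c],[u_1,\dots,u_k,i|u],[d_1,\dots,d_k,i|d])\in\mathcal{HB}\mid k\ge0\}$; $S_{pqs}=\{pqs(0,cs,us,ds)\mid cs,us,ds\in\mathcal{HU}\}\cup\{pqs(i,cs,us,[t|ds])\in\mathcal{HB}\mid i>0$ a natural number, $1,\dots,i$ are members of $cs$, and if $cs$ is a list of distinct members then $(cs,us,ds)$ is correct up to $i$ w.r.t. $i\}$; $S=S_{pq}\cup S_{pqs}$. *)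

theory Defs
  imports Main
begin

datatype gterm = Zero | Suc_t gterm | Nil_t | Cons_t gterm gterm

datatype gatom = Pqs gterm gterm gterm gterm | Pq gterm gterm gterm gterm

fun nat_t :: "nat \<Rightarrow> gterm" where
  "nat_t 0 = Zero"
| "nat_t (Suc n) = Suc_t (nat_t n)"

text \<open>Prolog list notation [e1,...,en|e].\<close>
definition mk_list :: "gterm list \<Rightarrow> gterm \<Rightarrow> gterm" where
  "mk_list es e = foldr Cons_t es e"

definition kth_member :: "nat \<Rightarrow> gterm \<Rightarrow> gterm \<Rightarrow> bool" where
  "kth_member k e t \<longleftrightarrow> k \<ge> 1 \<and> (\<exists>es e'. length es = k - 1 \<and> t = mk_list (es @ [e]) e')"

definition member_t :: "gterm \<Rightarrow> gterm \<Rightarrow> bool" where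
  "member_t e t \<longleftrightarrow> (\<exists>k. kth_member k e t)"

definition distinct_list_t :: "gterm \<Rightarrow> bool" where
  "distinct_list_t t \<longleftrightarrow> (\<exists>es. t = mk_list es Nil_t \<and> distinct es)"

text \<open>Up-diagonal number k + j - i and down-diagonal number k + i - j (integers),
  where j is the k-th member of cs.\<close>
definition correct_upto :: "gterm \<Rightarrow> gterm \<Rightarrow> gterm \<Rightarrow> nat \<Rightarrow> nat \<Rightarrow> bool" where
  "correct_upto cs us ds m i \<longleftrightarrow>
     m \<le> i \<and>
     distinct_list_t cs \<and>
     (\<forall>j\<in>{1..m}. member_t (nat_t j) cs) \<and>
     (\<forall>j1\<in>{1..m}. \<forall>j2\<in>{1..m}. \<forall>k1 k2.
        j1 \<noteq> j2 \<and> kth_member k1 (nat_t j1) cs \<and> kth_member k2 (nat_t j2) cs \<longrightarrow>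
          int k1 + int j1 - int i \<noteq> int k2 + int j2 - int i) \<and>
     (\<forall>j1\<in>{1..m}. \<forall>j2\<in>{1..m}. \<forall>k1 k2.
        j1 \<noteq> j2 \<and> kth_member k1 (nat_t j1) cs \<and> kth_member k2 (nat_t j2) cs \<longrightarrow>
          int k1 + int i - int j1 \<noteq> int k2 + int i - int j2) \<and>
     (\<forall>j\<in>{1..m}. \<forall>k. kth_member k (nat_t j) cs \<longrightarrow>
        (\<forall>l::nat. int l = int k + int j - int i \<and> l > 0 \<longrightarrow> kth_member l (nat_t j) us) \<and>
        (\<forall>l::nat. int l = int k + int i - int j \<and> l > 0 \<longrightarrow> kth_member l (nat_t j) ds))"

definition S_pq :: "gatom set" where
  "S_pq = {Pq i (mk_list cs (Cons_t i c)) (mk_list us (Cons_t i u)) (mk_list ds (Cons_t i d))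
           | i c u d cs us ds. length cs = length us \<and> length us = length ds}"

definition S_pqs :: "gatom set" where
  "S_pqs = {Pqs Zero cs us ds | cs us ds. True} \<union>
           {Pqs (nat_t i) cs us (Cons_t t ds) | i cs us t ds.
              i > 0 \<and> (\<forall>j\<in>{1..i}. member_t (nat_t j) cs) \<and>
              (distinct_list_t cs \<longrightarrow> correct_upto cs us ds i i)}"

definition S_spec :: "gatom set" where
  "S_spec = S_pq \<union> S_pqs"

text \<open>Ground instances (head, body) of clauses C1--C4: all variables replaced by ground terms.\<close>
inductive_set nqueens_ground :: "(gatom \<times> gatom list) set" where
  C1: "(Pqs Zero x1 x2 x3, []) \<in> nqueens_ground"
| C2: "(Pqs (Suc_t i) cs us (Cons_t x ds),
        [Pqs i cs (Cons_t y us) ds, Pq (Suc_t i) cs us ds]) \<in> nqueens_ground"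
| C3: "(Pq i (Cons_t i x1) (Cons_t i x2) (Cons_t i x3), []) \<in> nqueens_ground"
| C4: "(Pq i (Cons_t x1 cs) (Cons_t x2 us) (Cons_t x3 ds), [Pq i cs us ds]) \<in> nqueens_ground"

definition herbrand_model :: "gatom set \<Rightarrow> bool" where
  "herbrand_model I \<longleftrightarrow> (\<forall>H B. (H, B) \<in> nqueens_ground \<and> set B \<subseteq> I \<longrightarrow> H \<in> I)"

definition least_herbrand_model :: "gatom set" where
  "least_herbrand_model = \<Inter>{I. herbrand_model I}"

end

theory Submission
  imports Defs
begin

lemma mk_list_Cons[simp]: "mk_list (a#es) e = Cons_t a (mk_list es e)"
  by (simp add: mk_list_def)
lemma mk_list_Nil[simp]: "mk_list [] e = e"
  by (simp add: mk_list_def)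

lemma nat_t_inj[simp]: "nat_t a = nat_t b \<longleftrightarrow> a = b"
proof (induction a arbitrary: b)
  case 0 then show ?case by (cases b) auto
next
  case (Suc a) then show ?case by (cases b) auto
qed

lemma kth_Nil[simp]: "\<not> kth_member k e Nil_t"
proof
  assume "kth_member k e Nil_t"
  then obtain es e' where "Nil_t = mk_list (es @ [e]) e'" by (auto simp: kth_member_def)
  then show False by (cases es) auto
qed

lemma kth_Cons:
  "kth_member k e (Cons_t a t) \<longleftrightarrow> (k = 1 \<and> e = a) \<or> (k > 1 \<and> kth_member (k - 1) e t)"
proof
  assume "kth_member k e (Cons_t a t)"
  then obtain es e' where k: "k \<ge> 1" and l: "length es = k - 1"
    and eq: "Cons_t a t = mk_list (es @ [e]) e'" by (auto simp: kth_member_def)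
  show "(k = 1 \<and> e = a) \<or> (k > 1 \<and> kth_member (k - 1) e t)"
  proof (cases es)
    case Nil then show ?thesis using k l eq by auto
  next
    case (Cons b es')
    then have "t = mk_list (es' @ [e]) e'" "length es' = k - 1 - 1" "k > 1" using eq l k by auto
    then show ?thesis unfolding kth_member_def by auto
  qed
next
  assume "(k = 1 \<and> e = a) \<or> (k > 1 \<and> kth_member (k - 1) e t)"
  then show "kth_member k e (Cons_t a t)"
  proof
    assume "k = 1 \<and> e = a"
    then show ?thesis unfolding kth_member_def
      by (intro conjI exI[of _ "[]"] exI[of _ t]) auto
  next
    assume "k > 1 \<and> kth_member (k - 1) e t"
    then obtain es e' where "length es = k - 1 - 1" "t = mk_list (es @ [e]) e'" "k > 1"
      by (auto simp: kth_member_def)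
    then show ?thesis unfolding kth_member_def
      by (intro conjI exI[of _ "a#es"] exI[of _ e']) auto
  qed
qed

lemma kth_isCons: "kth_member k e t \<Longrightarrow> \<exists>a t'. t = Cons_t a t'"
proof -
  assume "kth_member k e t"
  then obtain es e' where "t = mk_list (es @ [e]) e'" by (auto simp: kth_member_def)
  then show ?thesis by (cases es) (auto simp: mk_list_def)
qed

lemma kth_fun: "kth_member k e t \<Longrightarrow> kth_member k e' t \<Longrightarrow> e = e'"
proof (induction k arbitrary: t)
  case 0 then show ?case by (auto simp: kth_member_def)
next
  case (Suc k)
  then obtain a t' where t: "t = Cons_t a t'" using kth_isCons by blast
  show ?case using Suc unfolding t by (auto simp: kth_Cons)
qed

lemma kth_mk: "kth_member (Suc (length es)) e (mk_list es (Cons_t e c))"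
  unfolding kth_member_def by (intro conjI exI[of _ es] exI[of _ c]) (auto simp: mk_list_def)

lemma kth_set: "kth_member k e (mk_list es Nil_t) \<Longrightarrow> e \<in> set es"
proof (induction es arbitrary: k)
  case Nil then show ?case by simp
next
  case (Cons a es) then show ?case by (auto simp: kth_Cons)
qed

lemma kth_uniq: "distinct es \<Longrightarrow> kth_member k e (mk_list es Nil_t) \<Longrightarrow>
   kth_member k' e (mk_list es Nil_t) \<Longrightarrow> k = k'"
proof (induction es arbitrary: k k')
  case Nil then show ?case by simp
next
  case (Cons a es)
  have d: "a \<notin> set es" "distinct es" using Cons.prems by auto
  have h1: "(k = 1 \<and> e = a) \<or> (k > 1 \<and> kth_member (k - 1) e (mk_list es Nil_t))"
    using Cons.prems(2) by (simp add: kth_Cons)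
  have h2: "(k' = 1 \<and> e = a) \<or> (k' > 1 \<and> kth_member (k' - 1) e (mk_list es Nil_t))"
    using Cons.prems(3) by (simp add: kth_Cons)
  show ?case
  proof (cases "k = 1")
    case True
    then have "e = a" using h1 by auto
    then show ?thesis using h2 True d kth_set by blast
  next
    case False
    then have "k > 1" "kth_member (k - 1) e (mk_list es Nil_t)" using h1 by auto
    moreover then have "e \<noteq> a" using d kth_set by blast
    then have "k' > 1" "kth_member (k' - 1) e (mk_list es Nil_t)" using h2 by auto
    ultimately have "k - 1 = k' - 1" using Cons.IH d by blast
    then show ?thesis using \<open>k > 1\<close> \<open>k' > 1\<close> by simp
  qed
qed

lemma step:
  assumes kc: "kth_member (Suc k0) (nat_t n) cs"
    and ku: "kth_member (Suc k0) (nat_t n) us"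
    and kd: "kth_member (Suc k0) (nat_t n) ds"
    and n: "n = Suc i0"
    and mem: "\<forall>j\<in>{1..i0}. member_t (nat_t j) cs"
    and H: "i0 > 0 \<Longrightarrow> \<exists>t ds''. ds = Cons_t t ds'' \<and>
              (distinct_list_t cs \<longrightarrow> correct_upto cs (Cons_t y us) ds'' i0 i0)"
  shows "(\<forall>j\<in>{1..n}. member_t (nat_t j) cs) \<and> (distinct_list_t cs \<longrightarrow> correct_upto cs us ds n n)"
proof -
  have memn: "\<forall>j\<in>{1..n}. member_t (nat_t j) cs"
  proof
    fix j assume j: "j \<in> {1..n}"
    show "member_t (nat_t j) cs"
    proof (cases "j = n")
      case True then show ?thesis using kc by (auto simp: member_t_def)
    next
      case False then show ?thesis using j n mem by auto
    qed
  qed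
  moreover have "distinct_list_t cs \<longrightarrow> correct_upto cs us ds n n"
  proof
    assume dc: "distinct_list_t cs"
    have uniq: "\<And>k. kth_member k (nat_t n) cs \<Longrightarrow> k = Suc k0"
      using dc kc kth_uniq unfolding distinct_list_t_def by blast
    have body: "i0 > 0 \<Longrightarrow> \<exists>t ds''. ds = Cons_t t ds'' \<and> correct_upto cs (Cons_t y us) ds'' i0 i0"
      using H dc by blast
    have place: "\<forall>j\<in>{1..n}. \<forall>k. kth_member k (nat_t j) cs \<longrightarrow>
        (\<forall>l::nat. int l = int k + int j - int n \<and> l > 0 \<longrightarrow> kth_member l (nat_t j) us) \<and>
        (\<forall>l::nat. int l = int k + int n - int j \<and> l > 0 \<longrightarrow> kth_member l (nat_t j) ds)"
    proof (intro ballI allI impI conjI)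
      fix j k l assume j: "j \<in> {1..n}" and k: "kth_member k (nat_t j) cs"
        and l: "int l = int k + int j - int n \<and> l > 0"
      show "kth_member l (nat_t j) us"
      proof (cases "j = n")
        case True then have "k = Suc k0" using uniq k by simp
        then have "l = Suc k0" using l True by simp
        then show ?thesis using ku True by simp
      next
        case False then have j': "j \<in> {1..i0}" "i0 > 0" using j n by auto
        obtain t ds'' where cu: "correct_upto cs (Cons_t y us) ds'' i0 i0"
          using body j' by blast
        have "\<forall>l. int l = int k + int j - int i0 \<and> l > 0 \<longrightarrow> kth_member l (nat_t j) (Cons_t y us)"
          using cu j' k unfolding correct_upto_def by blast
        then have "kth_member (Suc l) (nat_t j) (Cons_t y us)" using l n by auto
        then show ?thesis using l by (simp add: kth_Cons)
      qed
    next
      fix j k l assume j: "j \<in> {1..n}" and k: "kth_member k (nat_t j) cs"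
        and l: "int l = int k + int n - int j \<and> l > 0"
      show "kth_member l (nat_t j) ds"
      proof (cases "j = n")
        case True then have "k = Suc k0" using uniq k by simp
        then have "l = Suc k0" using l True by simp
        then show ?thesis using kd True by simp
      next
        case False then have j': "j \<in> {1..i0}" "i0 > 0" using j n by auto
        obtain t ds'' where ds: "ds = Cons_t t ds''" and cu: "correct_upto cs (Cons_t y us) ds'' i0 i0"
          using body j' by blast
        have "\<forall>l. int l = int k + int i0 - int j \<and> l > 0 \<longrightarrow> kth_member l (nat_t j) ds''"
          using cu j' k unfolding correct_upto_def by blast
        moreover have "k \<ge> 1" using k by (simp add: kth_member_def)
        ultimately have "kth_member (l - 1) (nat_t j) ds''" using l n j' by auto
        moreover have "l > 1" using l n j' \<open>k \<ge> 1\<close> by auto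
        ultimately show ?thesis using ds by (simp add: kth_Cons)
      qed
    qed
    have up: "\<forall>j1\<in>{1..n}. \<forall>j2\<in>{1..n}. \<forall>k1 k2.
        j1 \<noteq> j2 \<and> kth_member k1 (nat_t j1) cs \<and> kth_member k2 (nat_t j2) cs \<longrightarrow>
          int k1 + int j1 - int n \<noteq> int k2 + int j2 - int n"
    proof (intro ballI allI impI)
      fix j1 j2 k1 k2 assume j1: "j1 \<in> {1..n}" and j2: "j2 \<in> {1..n}" and
        h: "j1 \<noteq> j2 \<and> kth_member k1 (nat_t j1) cs \<and> kth_member k2 (nat_t j2) cs"
      have gen: "int ka + int ja - int n \<noteq> int kb + int n - int n"
        if "ja \<in> {1..n}" "ja \<noteq> n" "kth_member ka (nat_t ja) cs" "kb = Suc k0" for ja ka kb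
      proof
        assume e: "int ka + int ja - int n = int kb + int n - int n"
        then have "kth_member (Suc k0) (nat_t ja) us" using place that by auto
        then have "nat_t ja = nat_t n" using ku kth_fun by blast
        then show False using that by simp
      qed
      show "int k1 + int j1 - int n \<noteq> int k2 + int j2 - int n"
      proof (cases "j1 = n \<or> j2 = n")
        case True
        show ?thesis
        proof (cases "j1 = n")
          case True
          then have "k1 = Suc k0" using uniq h by simp
          then have "int k2 + int j2 - int n \<noteq> int k1 + int n - int n"
            using gen[of j2 k2 k1] h j2 True by auto
          then show ?thesis using True by linarith
        next
          case False
          then have "j2 = n" using \<open>j1 = n \<or> j2 = n\<close> by simp
          then have "k2 = Suc k0" using uniq h by simp
          then have "int k1 + int j1 - int n \<noteq> int k2 + int n - int n"
            using gen[of j1 k1 k2] h j1 False by auto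
          then show ?thesis using \<open>j2 = n\<close> by linarith
        qed
      next
        case False
        then have j': "j1 \<in> {1..i0}" "j2 \<in> {1..i0}" "i0 > 0" using j1 j2 n by auto
        obtain t ds'' where cu: "correct_upto cs (Cons_t y us) ds'' i0 i0"
          using body j' by blast
        have "int k1 + int j1 - int i0 \<noteq> int k2 + int j2 - int i0"
          using cu j' h unfolding correct_upto_def by blast
        then show ?thesis by simp
      qed
    qed
    have down: "\<forall>j1\<in>{1..n}. \<forall>j2\<in>{1..n}. \<forall>k1 k2.
        j1 \<noteq> j2 \<and> kth_member k1 (nat_t j1) cs \<and> kth_member k2 (nat_t j2) cs \<longrightarrow>
          int k1 + int n - int j1 \<noteq> int k2 + int n - int j2"
    proof (intro ballI allI impI)
      fix j1 j2 k1 k2 assume j1: "j1 \<in> {1..n}" and j2: "j2 \<in> {1..n}" and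
        h: "j1 \<noteq> j2 \<and> kth_member k1 (nat_t j1) cs \<and> kth_member k2 (nat_t j2) cs"
      have gen: "int ka + int n - int ja \<noteq> int kb + int n - int n"
        if "ja \<in> {1..n}" "ja \<noteq> n" "kth_member ka (nat_t ja) cs" "kb = Suc k0" for ja ka kb
      proof
        assume e: "int ka + int n - int ja = int kb + int n - int n"
        then have "kth_member (Suc k0) (nat_t ja) ds" using place that by auto
        then have "nat_t ja = nat_t n" using kd kth_fun by blast
        then show False using that by simp
      qed
      show "int k1 + int n - int j1 \<noteq> int k2 + int n - int j2"
      proof (cases "j1 = n \<or> j2 = n")
        case True
        show ?thesis
        proof (cases "j1 = n")
          case True
          then have "k1 = Suc k0" using uniq h by simp
          then have "int k2 + int n - int j2 \<noteq> int k1 + int n - int n"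
            using gen[of j2 k2 k1] h j2 True by auto
          then show ?thesis using True by linarith
        next
          case False
          then have "j2 = n" using \<open>j1 = n \<or> j2 = n\<close> by simp
          then have "k2 = Suc k0" using uniq h by simp
          then have "int k1 + int n - int j1 \<noteq> int k2 + int n - int n"
            using gen[of j1 k1 k2] h j1 False by auto
          then show ?thesis using \<open>j2 = n\<close> by linarith
        qed
      next
        case False
        then have j': "j1 \<in> {1..i0}" "j2 \<in> {1..i0}" "i0 > 0" using j1 j2 n by auto
        obtain t ds'' where cu: "correct_upto cs (Cons_t y us) ds'' i0 i0"
          using body j' by blast
        have "int k1 + int i0 - int j1 \<noteq> int k2 + int i0 - int j2"
          using cu j' h unfolding correct_upto_def by blast
        then show ?thesis using n by simp
      qed
    qed
    show "correct_upto cs us ds n n"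
      unfolding correct_upto_def using dc memn place up down by blast
  qed
  ultimately show ?thesis by blast
qed

lemma C2_case:
  assumes b1: "Pqs i cs (Cons_t y us) ds \<in> S_spec" and b2: "Pq (Suc_t i) cs us ds \<in> S_spec"
  shows "Pqs (Suc_t i) cs us (Cons_t x ds) \<in> S_spec"
proof -
  from b2 obtain cs' us' ds' c u d where
    cs: "cs = mk_list cs' (Cons_t (Suc_t i) c)" and us: "us = mk_list us' (Cons_t (Suc_t i) u)"
    and ds: "ds = mk_list ds' (Cons_t (Suc_t i) d)"
    and len: "length cs' = length us'" "length us' = length ds'"
    unfolding S_spec_def S_pq_def S_pqs_def by blast
  from b1 obtain i0 where i0: "i = nat_t i0" and mem: "\<forall>j\<in>{1..i0}. member_t (nat_t j) cs"
    and H: "i0 > 0 \<Longrightarrow> \<exists>t ds''. ds = Cons_t t ds'' \<and>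
              (distinct_list_t cs \<longrightarrow> correct_upto cs (Cons_t y us) ds'' i0 i0)"
  proof -
    have "i = Zero \<or> (\<exists>i0 t ds''. i = nat_t i0 \<and> i0 > 0 \<and> ds = Cons_t t ds'' \<and>
         (\<forall>j\<in>{1..i0}. member_t (nat_t j) cs) \<and>
         (distinct_list_t cs \<longrightarrow> correct_upto cs (Cons_t y us) ds'' i0 i0))"
      using b1 unfolding S_spec_def S_pq_def S_pqs_def by blast
    then show ?thesis
    proof
      assume "i = Zero"
      then show ?thesis using that[of 0] by simp
    next
      assume "\<exists>i0 t ds''. i = nat_t i0 \<and> i0 > 0 \<and> ds = Cons_t t ds'' \<and>
         (\<forall>j\<in>{1..i0}. member_t (nat_t j) cs) \<and>
         (distinct_list_t cs \<longrightarrow> correct_upto cs (Cons_t y us) ds'' i0 i0)"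
      then show ?thesis using that by blast
    qed
  qed
  define n where "n = Suc i0"
  have nt: "nat_t n = Suc_t i" using i0 n_def by simp
  have kc: "kth_member (Suc (length cs')) (nat_t n) cs" using kth_mk cs nt by simp
  have ku: "kth_member (Suc (length cs')) (nat_t n) us" using kth_mk[of us'] us nt len by simp
  have kd: "kth_member (Suc (length cs')) (nat_t n) ds" using kth_mk[of ds'] ds nt len by simp
  have "(\<forall>j\<in>{1..n}. member_t (nat_t j) cs) \<and> (distinct_list_t cs \<longrightarrow> correct_upto cs us ds n n)"
    using step[OF kc ku kd n_def mem H] by blast
  then have "Pqs (nat_t n) cs us (Cons_t x ds) \<in> S_pqs"
    unfolding S_pqs_def n_def by blast
  then show ?thesis using nt by (simp add: S_spec_def)
qed

lemma S_pq_intro: "length cs = length us \<Longrightarrow> length us = length ds \<Longrightarrow>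
  Pq i (mk_list cs (Cons_t i c)) (mk_list us (Cons_t i u)) (mk_list ds (Cons_t i d)) \<in> S_pq"
  unfolding S_pq_def by blast

lemma model: "(H, B) \<in> nqueens_ground \<Longrightarrow> (\<forall>b\<in>set B. b \<in> S_spec) \<Longrightarrow> H \<in> S_spec"
proof (induction rule: nqueens_ground.cases)
  case (C1 x1 x2 x3) then show ?case by (auto simp: S_spec_def S_pqs_def)
next
  case (C2 i cs us x ds y) then show ?case using C2_case by auto
next
  case (C3 i x1 x2 x3)
  have "Pq i (mk_list [] (Cons_t i x1)) (mk_list [] (Cons_t i x2)) (mk_list [] (Cons_t i x3)) \<in> S_pq"
    unfolding S_pq_def by blast
  then show ?case using C3 by (simp add: S_spec_def)
next
  case (C4 i x1 cs x2 us x3 ds)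
  then have "Pq i cs us ds \<in> S_pq" by (auto simp: S_spec_def S_pqs_def)
  then obtain cs' us' ds' c u d where
    "cs = mk_list cs' (Cons_t i c)" "us = mk_list us' (Cons_t i u)" "ds = mk_list ds' (Cons_t i d)"
    "length cs' = length us'" "length us' = length ds'"
    unfolding S_pq_def by blast
  then have "Pq i (mk_list (x1#cs') (Cons_t i c)) (mk_list (x2#us') (Cons_t i u))
      (mk_list (x3#ds') (Cons_t i d)) \<in> S_pq"
    using S_pq_intro[of "x1#cs'" "x2#us'" "x3#ds'"] by simp
  then show ?case using C4 by (simp add: S_spec_def \<open>cs = _\<close> \<open>us = _\<close> \<open>ds = _\<close>)
qed

theorem mainTheorem2:
  shows "least_herbrand_model \<subseteq> S_spec \<and>
         (\<forall>H B. (H, B) \<in> nqueens_ground \<and> (\<forall>b\<in>set B. b \<in> S_spec) \<longrightarrow> H \<in> S_spec)"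
proof -
  have hm: "herbrand_model S_spec" unfolding herbrand_model_def using model by blast
  then have "least_herbrand_model \<subseteq> S_spec" unfolding least_herbrand_model_def by blast
  then show ?thesis using model by blast
qed

end
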